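(* Let $G_{\|v_0}$ be an initialized Borel game, let $\lambda$ be a requirement on $G$ and let $i\in\Pi$. Then the abstract negotiation game $\mathrm{Abs}_{\lambda i}(G)_{\|[v_0]}$ satisfies $$\inf_{\tau_\mathbb{P}}\ \sup_{\tau_\mathbb{C}}\ \nu_\mathbb{C}\big(\langle\tau_\mathbb{P},\tau_\mathbb{C}\rangle_{[v_0]}\big)=\inf_{\bar\sigma_{-i}\in\lambda\mathrm{Rat}_i(v_0)}\ \sup_{\sigma_i}\ \mu_i\big(\langle\bar\sigma_{-i},\sigma_i\rangle_{v_0}\big).$$
   Context: A game is a tuple $G=(\Pi,V,(V_i)_{i\in\Pi},E,\mu)$ where $\Pi$ is a finite set of players, $(V,E)$ is a finite directed graph in which every vertex has at least one outgoing edge, $(V_i)_{i\in\Pi}$ is a partition of $V$, and $\mu:V^\omega\to\mathbb{R}^\Pi$ is the outcome function; $G$ is Borel if $\mu$ is Borel measurable ($V^\omega$ with the product topology). Plays, histories, strategies, profiles, compatibility and $\langle\bar\sigma\rangle_v$ are as usual; $-i=\Pi\setminus\{i\}$; $\bar\sigma_{\|hw}$ is the profile with $\sigma_{j\|hw}(h')=\sigma_j(hh')$. A requirement is a map $\lambda:V\to\mathbb{R}\cup\{\pm\infty\}$. A play $\rho$ is $\lambda$-consistent if for every $j\in\Pi$ and $n$ with $\rho_n\in V_j$, $\mu_j(\rho_n\rho_{n+1}\cdots)\ge\lambda(\rho_n)$. $\lambda\mathrm{Rat}_i(v)$ is the set of profiles $\bar\sigma_{-i}$ in $G_{\|v}$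 for which there exists $\sigma_i$ such that for every history $hw$ from $v$ compatible with $\bar\sigma_{-i}$, $\langle\bar\sigma_{\|hw}\rangle_w$ is $\lambda$-consistent; $\inf\emptyset=+\infty$. The abstract negotiation game $\mathrm{Abs}_{\lambda i}(G)_{\|[v_0]}$ is a two-player zero-sum game between Prover $\mathbb{P}$ and Challenger $\mathbb{C}$. Challenger's states are $[\rho]$ for $\rho$ a $\lambda$-consistent play of $G$. Prover's states are $[hv]$ for $hv$ a history of $G$ with $h$ ending in $V_i$, states $[v]$ for $v\in V$, and two extra states $\top,\bot$. The initial state is $[v_0]$. Transitions: $[hv]\to[v\rho]$ whenever $v\rho$ is a $\lambda$-consistent play starting at $v$ (Prover proposes a play); $[\rho]\to[\rho_0\cdots\rho_nv]$ whenever $\rho_n\in V_i$, $\rho_nv\in E$ and $v\neq\rho_{n+1}$ (Challenger makes player $i$ deviate); $[\rho]\to\top$ (Challenger accepts); $[hv]\to\bot$ for every Prover state $[hv]$ or $[v]$; and self-loops $\top\to\top$, $\bot\to\bot$. Writing a play of this game as $[v_0][\rho^{(0)}][h^{(1)}v_1][\rho^{(1)}]\cdots$, where each $h^{(k)}v_k$ is the Prover state reached after the $k$-th deviation (so $h^{(k)}$ is the prefix of $\rho^{(k-1)}$ up to the deviation vertex), the outcome for Challenger is: $\nu_\mathbb{C}([v_0][\rho^{(0)}][h^{(1)}v_1][\rho^{(1)}]\cdots[h^{(k)}v_k][\rho^{(k)}]\top^\omega)=\mu_i(h^{(1)}\cdots h^{(k)}\rho^{(k)})$; $\nu_\mathbb{C}([v_0][\rho^{(0)}][h^{(1)}v_1][\rho^{(1)}]\cdots)=\mu_i(h^{(1)}h^{(2)}\cdots)$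 for plays with infinitely many deviations; $\nu_\mathbb{C}(H\bot^\omega)=+\infty$; and $\nu_\mathbb{P}=-\nu_\mathbb{C}$. $\langle\tau_\mathbb{P},\tau_\mathbb{C}\rangle_{[v_0]}$ is the play generated by strategies $\tau_\mathbb{P},\tau_\mathbb{C}$. *)

theory Defs
  imports "HOL-Probability.Probability" "HOL-Library.Omega_Words_Fun"
begin

(* A game: vertices = finite type 'v, players = finite type 'p,
   E edge relation, own v = the player controlling v (partition (V_j)),
   mu j = outcome of player j (a real on V^omega = nat => 'v). *)

definition is_play :: "('v \<times> 'v) set \<Rightarrow> (nat \<Rightarrow> 'v) \<Rightarrow> bool" where
  "is_play E \<rho> \<longleftrightarrow> (\<forall>n. (\<rho> n, \<rho> (Suc n)) \<in> E)"

definition is_hist :: "('v \<times> 'v) set \<Rightarrow> 'v list \<Rightarrow> bool" where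
  "is_hist E h \<longleftrightarrow> h \<noteq> [] \<and> (\<forall>k. Suc k < length h \<longrightarrow> (h ! k, h ! Suc k) \<in> E)"

definition lam_consistent ::
  "('v \<Rightarrow> 'p) \<Rightarrow> ('p \<Rightarrow> (nat \<Rightarrow> 'v) \<Rightarrow> real) \<Rightarrow> ('v \<Rightarrow> ereal) \<Rightarrow> (nat \<Rightarrow> 'v) \<Rightarrow> bool" where
  "lam_consistent own mu lam \<rho> \<longleftrightarrow>
     (\<forall>n. ereal (mu (own (\<rho> n)) (suffix n \<rho>)) \<ge> lam (\<rho> n))"

definition valid_strat :: "('v \<times> 'v) set \<Rightarrow> ('v \<Rightarrow> 'p) \<Rightarrow> 'p \<Rightarrow> ('v list \<Rightarrow> 'v) \<Rightarrow> bool" where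
  "valid_strat E own j \<sigma> \<longleftrightarrow> (\<forall>h. h \<noteq> [] \<and> own (last h) = j \<longrightarrow> (last h, \<sigma> h) \<in> E)"

fun hist_ext :: "('a list \<Rightarrow> 'a) \<Rightarrow> 'a list \<Rightarrow> nat \<Rightarrow> 'a list" where
  "hist_ext f h 0 = h"
| "hist_ext f h (Suc n) = hist_ext f h n @ [f (hist_ext f h n)]"

definition play_from :: "('a list \<Rightarrow> 'a) \<Rightarrow> 'a list \<Rightarrow> nat \<Rightarrow> 'a" where
  "play_from f h n = hist_ext f h (Suc n) ! n"

(* the play extending history h when all players follow profile \<sigma>;
   <\<sigma>>_v = outcome own \<sigma> [v];  <\<sigma>_{|hw}>_w = suffix (length (hw) - 1) (outcome own \<sigma> hw) *)
definition outcome :: "('v \<Rightarrow> 'p) \<Rightarrow> ('p \<Rightarrow> 'v list \<Rightarrow> 'v) \<Rightarrow> 'v list \<Rightarrow> nat \<Rightarrow> 'v" where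
  "outcome own \<sigma> h = play_from (\<lambda>h'. \<sigma> (own (last h')) h') h"

definition compatible :: "('v \<Rightarrow> 'p) \<Rightarrow> 'p \<Rightarrow> ('p \<Rightarrow> 'v list \<Rightarrow> 'v) \<Rightarrow> 'v \<Rightarrow> 'v list \<Rightarrow> bool" where
  "compatible own i \<sigma> v hw \<longleftrightarrow> hd hw = v \<and>
     (\<forall>k. Suc k < length hw \<and> own (hw ! k) \<noteq> i \<longrightarrow> hw ! Suc k = \<sigma> (own (hw ! k)) (take (Suc k) hw))"

(* \<lambda>Rat_i(v): profiles \<sigma>_{-i} (represented as full profiles whose i-th
   component is ignored) *)
definition lamRat ::
  "('v \<times> 'v) set \<Rightarrow> ('v \<Rightarrow> 'p) \<Rightarrow> ('p \<Rightarrow> (nat \<Rightarrow> 'v) \<Rightarrow> real) \<Rightarrow> ('v \<Rightarrow> ereal) \<Rightarrow> 'p \<Rightarrow> 'v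
    \<Rightarrow> ('p \<Rightarrow> 'v list \<Rightarrow> 'v) set" where
  "lamRat E own mu lam i v = {\<sigma>. (\<forall>j. j \<noteq> i \<longrightarrow> valid_strat E own j (\<sigma> j)) \<and>
     (\<exists>\<sigma>i. valid_strat E own i \<sigma>i \<and>
        (\<forall>hw. is_hist E hw \<and> compatible own i \<sigma> v hw \<longrightarrow>
           lam_consistent own mu lam (suffix (length hw - 1) (outcome own (\<sigma>(i := \<sigma>i)) hw))))}"

datatype 'v astate = PSt "'v list" | CSt "nat \<Rightarrow> 'v" | ATop | ABot

definition is_chal :: "'v astate \<Rightarrow> bool" where
  "is_chal s = (case s of CSt _ \<Rightarrow> True | _ \<Rightarrow> False)"

definition abs_trans ::
  "('v \<times> 'v) set \<Rightarrow> ('v \<Rightarrow> 'p) \<Rightarrow> ('p \<Rightarrow> (nat \<Rightarrow> 'v) \<Rightarrow> real) \<Rightarrow> ('v \<Rightarrow> ereal) \<Rightarrow> 'p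
    \<Rightarrow> 'v astate \<Rightarrow> 'v astate \<Rightarrow> bool" where
  "abs_trans E own mu lam i s t = (case s of
      PSt hv \<Rightarrow> t = ABot \<or> (\<exists>\<rho>. t = CSt \<rho> \<and> hv \<noteq> [] \<and> \<rho> 0 = last hv \<and> is_play E \<rho>
                                \<and> lam_consistent own mu lam \<rho>)
    | CSt \<rho> \<Rightarrow> t = ATop \<or> (\<exists>n v. own (\<rho> n) = i \<and> (\<rho> n, v) \<in> E \<and> v \<noteq> \<rho> (Suc n)
                                \<and> t = PSt (prefix (Suc n) \<rho> @ [v]))
    | ATop \<Rightarrow> t = ATop
    | ABot \<Rightarrow> t = ABot)"

definition valid_P ::
  "('v \<times> 'v) set \<Rightarrow> ('v \<Rightarrow> 'p) \<Rightarrow> ('p \<Rightarrow> (nat \<Rightarrow> 'v) \<Rightarrow> real) \<Rightarrow> ('v \<Rightarrow> ereal) \<Rightarrow> 'p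
    \<Rightarrow> ('v astate list \<Rightarrow> 'v astate) \<Rightarrow> bool" where
  "valid_P E own mu lam i \<tau> \<longleftrightarrow>
     (\<forall>h. h \<noteq> [] \<and> \<not> is_chal (last h) \<longrightarrow> abs_trans E own mu lam i (last h) (\<tau> h))"

definition valid_C ::
  "('v \<times> 'v) set \<Rightarrow> ('v \<Rightarrow> 'p) \<Rightarrow> ('p \<Rightarrow> (nat \<Rightarrow> 'v) \<Rightarrow> real) \<Rightarrow> ('v \<Rightarrow> ereal) \<Rightarrow> 'p
    \<Rightarrow> ('v astate list \<Rightarrow> 'v astate) \<Rightarrow> bool" where
  "valid_C E own mu lam i \<tau> \<longleftrightarrow>
     (\<forall>h. h \<noteq> [] \<and> is_chal (last h) \<longrightarrow> abs_trans E own mu lam i (last h) (\<tau> h))"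

definition abs_play ::
  "('v astate list \<Rightarrow> 'v astate) \<Rightarrow> ('v astate list \<Rightarrow> 'v astate) \<Rightarrow> 'v astate \<Rightarrow> nat \<Rightarrow> 'v astate" where
  "abs_play \<tau>P \<tau>C s0 = play_from (\<lambda>h. if is_chal (last h) then \<tau>C h else \<tau>P h) [s0]"

(* the part h^(k) contributed by the Prover state [h^(k) v_k] at position j *)
definition devpart :: "(nat \<Rightarrow> 'v astate) \<Rightarrow> nat \<Rightarrow> 'v list" where
  "devpart \<pi> j = (case \<pi> j of PSt hv \<Rightarrow> butlast hv | _ \<Rightarrow> [])"

definition iconcat :: "(nat \<Rightarrow> 'a list) \<Rightarrow> nat \<Rightarrow> 'a" where
  "iconcat L n = concat (map L [0..<(LEAST m. n < length (concat (map L [0..<m])))]) ! n"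

definition nu_C :: "('p \<Rightarrow> (nat \<Rightarrow> 'v) \<Rightarrow> real) \<Rightarrow> 'p \<Rightarrow> (nat \<Rightarrow> 'v astate) \<Rightarrow> ereal" where
  "nu_C mu i \<pi> =
     (if \<exists>n. \<pi> n = ABot then \<infinity>
      else if \<exists>n. \<pi> n = ATop then
        (let k = (LEAST n. \<pi> n = ATop) in
          (case \<pi> (k - 1) of
             CSt \<rho> \<Rightarrow> ereal (mu i (concat (map (devpart \<pi>) [0..<k]) \<frown> \<rho>))
           | _ \<Rightarrow> 0))
      else ereal (mu i (iconcat (devpart \<pi>))))"

end

theory Submission
  imports Defs
begin


abbreviation pre :: "nat \<Rightarrow> (nat \<Rightarrow> 'a) \<Rightarrow> 'a list" where "pre n w \<equiv> Omega_Words_Fun.prefix n w"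
abbreviation suf :: "nat \<Rightarrow> (nat \<Rightarrow> 'a) \<Rightarrow> nat \<Rightarrow> 'a" where "suf n w \<equiv> Omega_Words_Fun.suffix n w"

lemma he_len: "length (hist_ext f h n) = length h + n"
  by (induct n) auto

lemma he_take: "m \<le> n \<Longrightarrow> take (length h + m) (hist_ext f h n) = hist_ext f h m"
proof (induct n)
  case 0 then show ?case by (simp add: he_len)
next
  case (Suc n)
  show ?case
  proof (cases "m = Suc n")
    case True then show ?thesis by (simp add: he_len del: hist_ext.simps)
  next
    case False
    then have "m \<le> n" using Suc by simp
    then show ?thesis using Suc by (simp add: he_len)
  qed
qed

lemma pf_eq: "j < length h + n \<Longrightarrow> play_from f h j = hist_ext f h n ! j"
proof -
  assume a: "j < length h + n"
  define N where "N = max n (Suc j)"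
  have 1: "hist_ext f h n ! j = hist_ext f h N ! j"
    using he_take[where m=n and n=N and f=f and h=h] a unfolding N_def
    by (metis max.cobounded1 nth_take)
  have 2: "hist_ext f h (Suc j) ! j = hist_ext f h N ! j"
    using he_take[where m="Suc j" and n=N and f=f and h=h] unfolding N_def
    by (metis le_add2 less_Suc_eq_le max.cobounded2 nth_take le_add_same_cancel2 add_Suc_right less_add_Suc2 trans_less_add2)
  show ?thesis unfolding play_from_def using 1 2 by simp
qed

lemma pf_prefix: "pre (length h + n) (play_from f h) = hist_ext f h n"
  by (rule nth_equalityI) (auto simp: he_len pf_eq)

lemma pf_low: "j < length h \<Longrightarrow> play_from f h j = h ! j"
  using pf_eq[of j h 0 f] by simp

lemma pf_high: "length h \<le> j \<Longrightarrow> play_from f h j = f (pre j (play_from f h))"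
proof -
  assume "length h \<le> j"
  then obtain n where n: "j = length h + n" by (metis le_add_diff_inverse)
  have "play_from f h j = hist_ext f h (Suc n) ! j" using n by (intro pf_eq) simp
  also have "\<dots> = f (hist_ext f h n)" using n by (simp add: he_len nth_append)
  finally show ?thesis using n pf_prefix by metis
qed

lemma last_pre: "last (pre (Suc j) w) = w j"
  by simp

lemma abs_play_0: "abs_play tP tC s0 0 = s0"
  unfolding abs_play_def by (simp add: pf_low)

lemma abs_play_Suc: "abs_play tP tC s0 (Suc j) =
   (if is_chal (abs_play tP tC s0 j) then tC else tP) (pre (Suc j) (abs_play tP tC s0))"
  unfolding abs_play_def by (subst pf_high) simp_all

lemma outcome_low: "j < length h \<Longrightarrow> outcome own s h j = h ! j"
  unfolding outcome_def by (simp add: pf_low)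

lemma outcome_high: "length h \<le> Suc j \<Longrightarrow>
   outcome own s h (Suc j) = s (own (outcome own s h j)) (pre (Suc j) (outcome own s h))"
  unfolding outcome_def by (subst pf_high) simp_all

lemma outcome_pre: "pre (length h) (outcome own s h) = h"
  by (rule nth_equalityI) (auto simp: outcome_low)




definition dps :: "'v astate \<Rightarrow> 'v list" where
  "dps s = (case s of PSt hv \<Rightarrow> butlast hv | _ \<Rightarrow> [])"

definition Bc :: "(nat \<Rightarrow> 'v astate) \<Rightarrow> nat \<Rightarrow> 'v list" where
  "Bc \<pi> n = concat (map (devpart \<pi>) [0..<n])"

lemma devpart_dps: "devpart \<pi> j = dps (\<pi> j)"
  unfolding devpart_def dps_def by simp

lemma Bc_Suc: "Bc \<pi> (Suc n) = Bc \<pi> n @ dps (\<pi> n)"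
  unfolding Bc_def by (simp add: devpart_dps)

lemma Bc_0[simp]: "Bc \<pi> 0 = []"
  unfolding Bc_def by simp

lemma Bc_pre: "concat (map dps (pre n \<pi>)) = Bc \<pi> n"
  proof -
  have "devpart \<pi> = (\<lambda>x. dps (\<pi> x))" by (rule ext) (simp add: devpart_dps)
  then show ?thesis unfolding Bc_def subsequence_def by (simp add: comp_def)
qed

lemma Bc_mono: "n \<le> m \<Longrightarrow> \<exists>zs. Bc \<pi> m = Bc \<pi> n @ zs"
proof (induct m)
  case 0 then show ?case by simp
next
  case (Suc m)
  show ?case
  proof (cases "n = Suc m")
    case True then show ?thesis by simp
  next
    case False then have "n \<le> m" using Suc by simp
    then show ?thesis using Suc by (auto simp: Bc_Suc)
  qed
qed

lemma Bc_mono_nth: "n \<le> m \<Longrightarrow> j < length (Bc \<pi> n) \<Longrightarrow> Bc \<pi> m ! j = Bc \<pi> n ! j"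
  using Bc_mono[of n m \<pi>] by (auto simp: nth_append)

lemma Bc_mono_len: "n \<le> m \<Longrightarrow> length (Bc \<pi> n) \<le> length (Bc \<pi> m)"
  using Bc_mono[of n m \<pi>] by auto

lemma iconcat_Bc:
  assumes unb: "\<forall>N. \<exists>n. N < length (Bc \<pi> n)"
    and j: "j < length (Bc \<pi> n)"
  shows "iconcat (devpart \<pi>) j = Bc \<pi> n ! j"
proof -
  define k where "k = (LEAST m. j < length (Bc \<pi> m))"
  have k: "j < length (Bc \<pi> k)" unfolding k_def using unb by (metis LeastI)
  have "iconcat (devpart \<pi>) j = Bc \<pi> k ! j" unfolding iconcat_def k_def Bc_def by simp
  also have "\<dots> = Bc \<pi> n ! j"
    using k j Bc_mono_nth[where n=k and m=n and \<pi>=\<pi> and j=j] Bc_mono_nth[where n=n and m=k and \<pi>=\<pi> and j=j] by (cases "k \<le> n") auto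
  finally show ?thesis .
qed

lemma iconcat_pre:
  assumes unb: "\<forall>N. \<exists>n. N < length (Bc \<pi> n)"
  shows "Bc \<pi> n = pre (length (Bc \<pi> n)) (iconcat (devpart \<pi>))"
  by (auto intro!: nth_equalityI simp: iconcat_Bc[OF unb])

lemma lam_cons_suf: "lam_consistent own mu lam \<rho> \<Longrightarrow> lam_consistent own mu lam (suf k \<rho>)"
  unfolding lam_consistent_def by (simp add: add.commute)

lemma is_play_suf: "is_play E \<rho> \<Longrightarrow> is_play E (suf k \<rho>)"
  unfolding is_play_def by simp

lemma take_pre: "take a (pre b w) = pre (min a b) w"
  by (cases "a \<le> b") (simp_all add: subsequence_def take_map min_def)

locale GG =
  fixes E :: "('v \<times> 'v) set" and own :: "'v \<Rightarrow> 'p" and mu :: "'p \<Rightarrow> (nat \<Rightarrow> 'v) \<Rightarrow> real"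
    and lam :: "'v \<Rightarrow> ereal" and i :: 'p and v0 :: 'v
  assumes total: "\<forall>v. \<exists>w. (v, w) \<in> E"
begin

abbreviation "AT \<equiv> abs_trans E own mu lam i"

lemma AT_PSt: "AT (PSt hv) t \<Longrightarrow> t = ABot \<or> (\<exists>\<rho>. t = CSt \<rho> \<and> hv \<noteq> [] \<and> \<rho> 0 = last hv \<and> is_play E \<rho>
                                \<and> lam_consistent own mu lam \<rho>)"
  unfolding abs_trans_def by simp

lemma AT_CSt: "AT (CSt \<rho>) t \<Longrightarrow> t = ATop \<or> (\<exists>n v. own (\<rho> n) = i \<and> (\<rho> n, v) \<in> E \<and> v \<noteq> \<rho> (Suc n)
                                \<and> t = PSt (pre (Suc n) \<rho> @ [v]))"
  unfolding abs_trans_def by simp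

lemma AT_ATop: "AT ATop t \<Longrightarrow> t = ATop" unfolding abs_trans_def by simp
lemma AT_ABot: "AT ABot t \<Longrightarrow> t = ABot" unfolding abs_trans_def by simp

lemma AT_to_PSt: "AT s (PSt hv) \<Longrightarrow> \<exists>\<rho> d v. s = CSt \<rho> \<and> own (\<rho> d) = i \<and> (\<rho> d, v) \<in> E \<and> v \<noteq> \<rho> (Suc d)
    \<and> hv = pre (Suc d) \<rho> @ [v]"
  unfolding abs_trans_def by (cases s) auto

lemma AT_to_ATop: "AT s ATop \<Longrightarrow> s = ATop \<or> (\<exists>\<rho>. s = CSt \<rho>)"
  unfolding abs_trans_def by (cases s) auto

lemma AT_to_CSt: "AT s (CSt \<rho>) \<Longrightarrow> \<exists>hv. s = PSt hv"
  unfolding abs_trans_def by (cases s) auto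

lemma play_trans:
  assumes "valid_P E own mu lam i tP" "valid_C E own mu lam i tC"
  shows "AT (abs_play tP tC s0 n) (abs_play tP tC s0 (Suc n))"
proof -
  let ?p = "abs_play tP tC s0"
  have l: "last (pre (Suc n) ?p) = ?p n" "pre (Suc n) ?p \<noteq> []" by (simp_all add: subsequence_def)
  show ?thesis
  proof (cases "is_chal (?p n)")
    case True then show ?thesis using assms(2) l unfolding valid_C_def by (metis abs_play_Suc)
  next
    case False then show ?thesis using assms(1) l unfolding valid_P_def by (metis abs_play_Suc)
  qed
qed

definition goodplay :: "(nat \<Rightarrow> 'v astate) \<Rightarrow> bool" where
  "goodplay \<pi> \<longleftrightarrow> \<pi> 0 = PSt [v0] \<and> (\<forall>n. AT (\<pi> n) (\<pi> (Suc n))) \<and> (\<forall>n. \<pi> n \<noteq> ABot)"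

lemma ATop_abs: "(\<forall>n. AT (\<pi> n) (\<pi> (Suc n))) \<Longrightarrow> \<pi> n = ATop \<Longrightarrow> n \<le> m \<Longrightarrow> \<pi> m = ATop"
proof (induct m)
  case 0 then show ?case by simp
next
  case (Suc m)
  show ?case
  proof (cases "n = Suc m")
    case True then show ?thesis using Suc by simp
  next
    case False
    then have "\<pi> m = ATop" using Suc by simp
    moreover have "AT (\<pi> m) (\<pi> (Suc m))" using Suc(2) by blast
    ultimately show ?thesis using AT_ATop by simp
  qed
qed

lemma nu_top:
  assumes g: "goodplay \<pi>" and ex: "\<exists>n. \<pi> n = ATop"
  defines "k \<equiv> LEAST n. \<pi> n = ATop"
  shows "\<exists>\<rho>. k \<ge> 1 \<and> \<pi> (k - 1) = CSt \<rho> \<and> \<pi> k = ATop \<and> (\<forall>n. \<pi> n = ATop \<longleftrightarrow> k \<le> n)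
     \<and> nu_C mu i \<pi> = ereal (mu i (Bc \<pi> (k - 1) \<frown> \<rho>))"
proof -
  have tr: "\<forall>n. AT (\<pi> n) (\<pi> (Suc n))" and nb: "\<forall>n. \<pi> n \<noteq> ABot" and p0: "\<pi> 0 = PSt [v0]"
    using g unfolding goodplay_def by auto
  have kT: "\<pi> k = ATop" unfolding k_def by (rule LeastI_ex[OF ex])
  have k0: "k \<noteq> 0"
  proof
    assume "k = 0" then have "\<pi> 0 = ATop" using kT by simp
    then show False using p0 by simp
  qed
  then obtain k' where k': "k = Suc k'" by (cases k) auto
  have "\<pi> k' \<noteq> ATop" using k' not_less_Least[of k' "\<lambda>n. \<pi> n = ATop"] unfolding k_def by simp
  moreover have "AT (\<pi> k') ATop" using tr kT k' by metis
  ultimately obtain \<rho> where rho: "\<pi> k' = CSt \<rho>" using AT_to_ATop[of "\<pi> k'"] by blast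
  have all: "\<pi> n = ATop \<longleftrightarrow> k \<le> n" for n
  proof
    assume "\<pi> n = ATop" then show "k \<le> n" unfolding k_def by (rule Least_le)
  next
    assume "k \<le> n" then show "\<pi> n = ATop" using ATop_abs[OF tr kT] by blast
  qed
  have "nu_C mu i \<pi> = (case \<pi> (k - 1) of CSt \<rho> \<Rightarrow> ereal (mu i (concat (map (devpart \<pi>) [0..<k]) \<frown> \<rho>)) | _ \<Rightarrow> 0)"
    unfolding nu_C_def using nb ex by (simp add: k_def[symmetric] Let_def)
  also have "\<dots> = ereal (mu i (concat (map (devpart \<pi>) [0..<k]) \<frown> \<rho>))" using rho k' by simp
  also have "concat (map (devpart \<pi>) [0..<k]) = Bc \<pi> k'"
    using k' rho by (simp add: Bc_def[symmetric] Bc_Suc dps_def del: upt_Suc)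
  finally show ?thesis using k' rho kT all by auto
qed

lemma PSt_butlast:
  assumes tr: "\<forall>n. AT (\<pi> n) (\<pi> (Suc n))" and "\<pi> (Suc n) = PSt hv"
  shows "dps (\<pi> (Suc n)) \<noteq> []"
proof -
  have "AT (\<pi> n) (PSt hv)" using tr assms(2) by metis
  then obtain \<rho> d v where "hv = pre (Suc d) \<rho> @ [v]" using AT_to_PSt by blast
  then have "dps (\<pi> (Suc n)) = pre (Suc d) \<rho>" using assms(2) by (simp only: dps_def astate.case butlast_snoc)
  then show ?thesis by (metis length_0_conv nat.distinct(1) subsequence_length diff_zero)
qed

lemma grow:
  assumes g: "goodplay \<pi>" and nt: "\<forall>n. \<pi> n \<noteq> ATop"
  shows "length (Bc \<pi> n) < length (Bc \<pi> (n + 3))"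
proof -
  have tr: "\<forall>n. AT (\<pi> n) (\<pi> (Suc n))" and nb: "\<forall>n. \<pi> n \<noteq> ABot"
    using g unfolding goodplay_def by auto
  have "\<exists>m. n < m \<and> m \<le> n + 2 \<and> (\<exists>hv. \<pi> m = PSt hv)"
  proof (cases "\<pi> (Suc n)")
    case (PSt hv) then show ?thesis by (intro exI[of _ "Suc n"]) auto
  next
    case (CSt \<rho>)
    then have "AT (CSt \<rho>) (\<pi> (Suc (Suc n)))" using tr by metis
    then show ?thesis using AT_CSt nt by (intro exI[of _ "Suc (Suc n)"]) fastforce
  next
    case ATop then show ?thesis using nt by auto
  next
    case ABot then show ?thesis using nb by auto
  qed
  then obtain m hv where m: "n < m" "m \<le> n + 2" "\<pi> m = PSt hv" by auto
  obtain m' where m': "m = Suc m'" using m by (cases m) auto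
  have "dps (\<pi> m) \<noteq> []" using PSt_butlast[OF tr] m m' by metis
  then have "length (Bc \<pi> m) < length (Bc \<pi> (Suc m))" by (simp add: Bc_Suc)
  moreover have "length (Bc \<pi> n) \<le> length (Bc \<pi> m)" using m by (intro Bc_mono_len) simp
  moreover have "length (Bc \<pi> (Suc m)) \<le> length (Bc \<pi> (n+3))" using m by (intro Bc_mono_len) simp
  ultimately show ?thesis by simp
qed

lemma unbounded:
  assumes g: "goodplay \<pi>" and nt: "\<forall>n. \<pi> n \<noteq> ATop"
  shows "\<forall>N. \<exists>n. N < length (Bc \<pi> n)"
proof -
  have "N \<le> length (Bc \<pi> (3 * N))" for N
  proof (induct N)
    case 0 then show ?case by simp
  next
    case (Suc N) then show ?case using grow[OF g nt, of "3*N"] by (simp add: add.commute)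
  qed
  then show ?thesis by (metis Suc_le_lessD)
qed

lemma nu_inf:
  assumes g: "goodplay \<pi>" and nt: "\<forall>n. \<pi> n \<noteq> ATop"
  shows "nu_C mu i \<pi> = ereal (mu i (iconcat (devpart \<pi>)))"
  using g nt unfolding nu_C_def goodplay_def by auto

end



declare upt_Suc[simp del] subseq_to_Suc[simp del]

context GG begin

definition allvalid :: "('p \<Rightarrow> 'v list \<Rightarrow> 'v) \<Rightarrow> bool" where
  "allvalid s \<longleftrightarrow> (\<forall>j. valid_strat E own j (s j))"

definition icompat :: "('p \<Rightarrow> 'v list \<Rightarrow> 'v) \<Rightarrow> (nat \<Rightarrow> 'v) \<Rightarrow> bool" where
  "icompat s P \<longleftrightarrow> P 0 = v0 \<and> (\<forall>m. own (P m) \<noteq> i \<longrightarrow> P (Suc m) = s (own (P m)) (pre (Suc m) P))"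

lemma pre_nth: "k < m \<Longrightarrow> pre m P ! k = P k"
  by (simp add: subsequence_def)

lemma hist_pre: "is_play E P \<Longrightarrow> 1 \<le> m \<Longrightarrow> is_hist E (pre m P)"
  unfolding is_hist_def is_play_def by (auto simp: pre_nth)

lemma compat_pre: "icompat s P \<Longrightarrow> 1 \<le> m \<Longrightarrow> compatible own i s v0 (pre m P)"
  unfolding compatible_def icompat_def
  by (auto simp: pre_nth take_pre min_def hd_conv_nth)

lemma play_of: "(\<forall>m\<ge>1. is_hist E (pre m P)) \<Longrightarrow> is_play E P"
  unfolding is_play_def
proof
  fix n assume a: "\<forall>m\<ge>1. is_hist E (pre m P)"
  have h: "is_hist E (pre (Suc (Suc n)) P)" by (rule a[rule_format]) simp
  have "(pre (Suc (Suc n)) P ! n, pre (Suc (Suc n)) P ! Suc n) \<in> E"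
    using h unfolding is_hist_def by (simp del: upt_Suc)
  then show "(P n, P (Suc n)) \<in> E" by (simp add: nth_append)
qed

lemma icompat_of: "(\<forall>m\<ge>1. compatible own i s v0 (pre m P)) \<Longrightarrow> icompat s P"
  unfolding icompat_def
proof (intro conjI allI impI)
  assume a: "\<forall>m\<ge>1. compatible own i s v0 (pre m P)"
  have "compatible own i s v0 (pre 1 P)" by (rule a[rule_format]) simp
  then show "P 0 = v0" unfolding compatible_def by (simp add: subsequence_def upt_Suc)
  fix m assume o: "own (P m) \<noteq> i"
  have "compatible own i s v0 (pre (Suc (Suc m)) P)" by (rule a[rule_format]) simp
  then have "pre (Suc (Suc m)) P ! Suc m = s (own (pre (Suc (Suc m)) P ! m)) (take (Suc m) (pre (Suc (Suc m)) P))"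
    unfolding compatible_def using o by (simp add: pre_nth)
  then show "P (Suc m) = s (own (P m)) (pre (Suc m) P)" by (simp add: pre_nth take_pre)
qed

lemma snoc_cases:
  assumes "Suc k < length (xs @ [v])" "xs \<noteq> []"
  shows "(Suc k < length xs \<and> (xs @ [v]) ! k = xs ! k \<and> (xs @ [v]) ! Suc k = xs ! Suc k \<and> take (Suc k) (xs @ [v]) = take (Suc k) xs)
       \<or> (Suc k = length xs \<and> (xs @ [v]) ! k = last xs \<and> (xs @ [v]) ! Suc k = v \<and> take (Suc k) (xs @ [v]) = xs)"
proof (cases "Suc k < length xs")
  case True then show ?thesis by (simp add: nth_append)
next
  case False
  then have k: "Suc k = length xs" using assms by simp
  then have "k = length xs - 1" by simp
  then show ?thesis using k assms by (simp add: nth_append last_conv_nth)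
qed

lemma hist_snoc: "is_hist E xs \<Longrightarrow> (last xs, v) \<in> E \<Longrightarrow> is_hist E (xs @ [v])"
  unfolding is_hist_def
proof (intro conjI allI impI)
  fix k assume h: "xs \<noteq> [] \<and> (\<forall>k. Suc k < length xs \<longrightarrow> (xs ! k, xs ! Suc k) \<in> E)" and l: "(last xs, v) \<in> E"
    and k: "Suc k < length (xs @ [v])"
  show "((xs @ [v]) ! k, (xs @ [v]) ! Suc k) \<in> E" using snoc_cases[OF k] h l by auto
qed simp

lemma compat_snoc: "compatible own i s v0 xs \<Longrightarrow> xs \<noteq> [] \<Longrightarrow> own (last xs) = i \<Longrightarrow> compatible own i s v0 (xs @ [v])"
  unfolding compatible_def
proof (intro conjI allI impI)
  assume c: "hd xs = v0 \<and> (\<forall>k. Suc k < length xs \<and> own (xs ! k) \<noteq> i \<longrightarrow> xs ! Suc k = s (own (xs ! k)) (take (Suc k) xs))"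
    and ne: "xs \<noteq> []" and o: "own (last xs) = i"
  show "hd (xs @ [v]) = v0" using c ne by simp
  fix k assume k: "Suc k < length (xs @ [v]) \<and> own ((xs @ [v]) ! k) \<noteq> i"
  show "(xs @ [v]) ! Suc k = s (own ((xs @ [v]) ! k)) (take (Suc k) (xs @ [v]))"
    using snoc_cases[of k xs v] k c ne o by auto
qed

lemma outcome_nonempty_last: "pre (Suc n) (outcome own s H) \<noteq> [] \<and> last (pre (Suc n) (outcome own s H)) = outcome own s H n"
  by (simp add: last_pre)

lemma O_play: "allvalid s \<Longrightarrow> is_hist E H \<Longrightarrow> is_play E (outcome own s H)"
  unfolding is_play_def
proof
  fix n assume av: "allvalid s" and h: "is_hist E H"
  show "(outcome own s H n, outcome own s H (Suc n)) \<in> E"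
  proof (cases "Suc n < length H")
    case True then show ?thesis using h unfolding is_hist_def by (simp add: outcome_low)
  next
    case False
    then have "outcome own s H (Suc n) = s (own (outcome own s H n)) (pre (Suc n) (outcome own s H))"
      by (intro outcome_high) simp
    then show ?thesis using av outcome_nonempty_last[where n=n and s=s and H=H] unfolding allvalid_def valid_strat_def
      by metis
  qed
qed

lemma O_icompat:
  assumes av: "allvalid s'" and ag: "\<forall>j. j \<noteq> i \<longrightarrow> s' j = s j"
    and h: "is_hist E H" and c: "compatible own i s v0 H"
  shows "icompat s (outcome own s' H)"
  unfolding icompat_def
proof (intro conjI allI impI)
  let ?P = "outcome own s' H"
  have ne: "H \<noteq> []" using h unfolding is_hist_def by simp
  show "?P 0 = v0" using ne c unfolding compatible_def by (simp add: outcome_low hd_conv_nth)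
  fix m assume o: "own (?P m) \<noteq> i"
  show "?P (Suc m) = s (own (?P m)) (pre (Suc m) ?P)"
  proof (cases "Suc m < length H")
    case True
    have "take (Suc m) H = pre (Suc m) ?P"
      using outcome_pre[where h=H and own=own and s=s'] True by (metis take_pre min_def less_imp_le_nat)
    then show ?thesis using True c o unfolding compatible_def by (simp add: outcome_low)
  next
    case False
    then have "?P (Suc m) = s' (own (?P m)) (pre (Suc m) ?P)" by (intro outcome_high) simp
    then show ?thesis using ag o by simp
  qed
qed

lemma some_succ: "(x, SOME w. (x, w) \<in> E) \<in> E"
  using total by (metis someI_ex)

lemma realize:
  assumes ic: "icompat s P" and pl: "is_play E P"
  shows "\<exists>si. valid_strat E own i si \<and> outcome own (s(i := si)) [v0] = P"
proof -
  define si where "si h = (if h \<noteq> [] \<and> h = pre (length h) P then P (length h) else (SOME w. (last h, w) \<in> E))" for h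
  have val: "valid_strat E own i si" unfolding valid_strat_def
  proof (intro allI impI)
    fix h :: "'v list" assume h: "h \<noteq> [] \<and> own (last h) = i"
    show "(last h, si h) \<in> E"
    proof (cases "h = pre (length h) P")
      case True
      then have "last h = P (length h - 1)" using h
        by (metis last_conv_nth pre_nth diff_less length_greater_0_conv zero_less_one)
      moreover have "si h = P (length h)" unfolding si_def using True h by simp
      moreover have "(P (length h - 1), P (Suc (length h - 1))) \<in> E" using pl unfolding is_play_def by blast
      moreover have "Suc (length h - 1) = length h" using h by (cases h) auto
      ultimately show ?thesis by simp
    next
      case False
      then show ?thesis unfolding si_def using some_succ by simp
    qed
  qed
  define Ou where "Ou = outcome own (s(i := si)) [v0]"
  have eq: "\<forall>k\<le>n. Ou k = P k" for n
  proof (induct n)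
    case 0 then show ?case using ic unfolding icompat_def Ou_def by (simp add: outcome_low)
  next
    case (Suc n)
    have pe: "pre (Suc n) Ou = pre (Suc n) P" unfolding subsequence_def
      by (rule map_cong) (use Suc in \<open>auto simp: less_Suc_eq_le\<close>)
    have "Ou (Suc n) = (s(i := si)) (own (Ou n)) (pre (Suc n) Ou)" unfolding Ou_def by (intro outcome_high) simp
    also have "\<dots> = (s(i := si)) (own (P n)) (pre (Suc n) P)" using Suc pe by simp
    also have "\<dots> = P (Suc n)"
    proof (cases "own (P n) = i")
      case True then show ?thesis by (simp add: si_def)
    next
      case False then show ?thesis using ic unfolding icompat_def by simp
    qed
    finally show ?case using Suc le_Suc_eq by auto
  qed
  have "Ou = P" by (rule ext) (use eq in blast)
  then have "outcome own (s(i := si)) [v0] = P" by (simp only: Ou_def)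
  then show ?thesis using val by (intro exI[of _ si]) simp
qed

end



lemma pre_Suc: "pre (Suc n) w = pre n w @ [w n]"
  by (rule subseq_to_Suc) simp

lemma butlast_pre: "butlast (pre (Suc n) w) = pre n w"
  by (simp add: pre_Suc)

context GG begin

lemma hist_take: "is_hist E xs \<Longrightarrow> 1 \<le> m \<Longrightarrow> is_hist E (take m xs)"
  unfolding is_hist_def by auto

lemma compat_take: "compatible own i s v0 xs \<Longrightarrow> 1 \<le> m \<Longrightarrow> xs \<noteq> [] \<Longrightarrow> compatible own i s v0 (take m xs)"
  unfolding compatible_def by (auto simp: min_def take_take)

definition Hof :: "'v astate list \<Rightarrow> 'v list \<Rightarrow> 'v list" where
  "Hof A hv = concat (map dps (butlast A)) @ hv"

lemma dir1:
  assumes sR: "\<sigma> \<in> lamRat E own mu lam i v0"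
  shows "\<exists>tP. valid_P E own mu lam i tP \<and> (\<forall>tC. valid_C E own mu lam i tC \<longrightarrow>
     nu_C mu i (abs_play tP tC (PSt [v0])) \<le> (SUP si \<in> {si. valid_strat E own i si}. ereal (mu i (outcome own (\<sigma>(i := si)) [v0]))))"
proof -
  obtain si0 where vj: "\<forall>j. j \<noteq> i \<longrightarrow> valid_strat E own j (\<sigma> j)" and vi: "valid_strat E own i si0"
    and cons: "\<And>hw. is_hist E hw \<Longrightarrow> compatible own i \<sigma> v0 hw \<Longrightarrow>
           lam_consistent own mu lam (suf (length hw - 1) (outcome own (\<sigma>(i := si0)) hw))"
    using sR unfolding lamRat_def by blast
  define s' where "s' = \<sigma>(i := si0)"
  have av: "allvalid s'" unfolding allvalid_def s'_def using vj vi by auto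
  have ag: "\<forall>j. j \<noteq> i \<longrightarrow> s' j = \<sigma> j" unfolding s'_def by simp
  define tP where "tP A = (case last A of
      PSt hv \<Rightarrow> (if hv \<noteq> [] \<and> is_hist E (Hof A hv) \<and> compatible own i \<sigma> v0 (Hof A hv)
                 then CSt (suf (length (Hof A hv) - 1) (outcome own s' (Hof A hv))) else ABot)
    | ATop \<Rightarrow> ATop | _ \<Rightarrow> ABot)" for A
  have vP: "valid_P E own mu lam i tP" unfolding valid_P_def
  proof (intro allI impI)
    fix h :: "'v astate list" assume h: "h \<noteq> [] \<and> \<not> is_chal (last h)"
    show "AT (last h) (tP h)"
    proof (cases "last h")
      case (PSt hv)
      show ?thesis
      proof (cases "hv \<noteq> [] \<and> is_hist E (Hof h hv) \<and> compatible own i \<sigma> v0 (Hof h hv)")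
        case True
        let ?H = "Hof h hv"
        let ?\<rho> = "suf (length ?H - 1) (outcome own s' ?H)"
        have t: "tP h = CSt ?\<rho>" unfolding tP_def using PSt True by simp
        have Hne: "?H \<noteq> []" using True unfolding Hof_def by simp
        have "?\<rho> 0 = ?H ! (length ?H - 1)" using Hne by (simp add: outcome_low)
        also have "\<dots> = last ?H" using Hne by (simp add: last_conv_nth)
        also have "\<dots> = last hv" using True unfolding Hof_def by simp
        finally have r0: "?\<rho> 0 = last hv" .
        have pl: "is_play E ?\<rho>" using O_play[OF av] True by (intro is_play_suf) blast
        have lc: "lam_consistent own mu lam ?\<rho>" using cons True unfolding s'_def by blast
        show ?thesis unfolding t PSt abs_trans_def using True r0 pl lc by auto
      next
        case False
        then have "tP h = ABot" unfolding tP_def using PSt by auto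
        then show ?thesis unfolding PSt abs_trans_def by simp
      qed
    next
      case (CSt \<rho>) then show ?thesis using h by (simp add: is_chal_def)
    next
      case ATop then show ?thesis unfolding tP_def abs_trans_def by simp
    next
      case ABot then show ?thesis unfolding tP_def abs_trans_def by simp
    qed
  qed
  have main: "nu_C mu i (abs_play tP tC (PSt [v0])) \<le> (SUP si \<in> {si. valid_strat E own i si}. ereal (mu i (outcome own (\<sigma>(i := si)) [v0])))"
    if vC: "valid_C E own mu lam i tC" for tC
  proof -
    define \<pi> where "\<pi> = abs_play tP tC (PSt [v0])"
    have tr: "\<forall>n. AT (\<pi> n) (\<pi> (Suc n))" unfolding \<pi>_def using play_trans[OF vP vC] by blast
    have p0: "\<pi> 0 = PSt [v0]" unfolding \<pi>_def by (simp add: abs_play_0)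
    define Inv where "Inv n = (case \<pi> n of
         PSt hv \<Rightarrow> hv \<noteq> [] \<and> is_hist E (Bc \<pi> n @ hv) \<and> compatible own i \<sigma> v0 (Bc \<pi> n @ hv)
       | CSt \<rho> \<Rightarrow> (\<exists>H. is_hist E H \<and> compatible own i \<sigma> v0 H \<and> length H = Suc (length (Bc \<pi> n))
                      \<and> Bc \<pi> n \<frown> \<rho> = outcome own s' H)
       | ATop \<Rightarrow> True | ABot \<Rightarrow> False)" for n
    have inv: "Inv n" for n
    proof (induct n)
      case 0
      show ?case unfolding Inv_def p0 is_hist_def compatible_def by simp
    next
      case (Suc n)
      show ?case
      proof (cases "\<pi> n")
        case (PSt hv)
        then have I: "hv \<noteq> [] \<and> is_hist E (Bc \<pi> n @ hv) \<and> compatible own i \<sigma> v0 (Bc \<pi> n @ hv)"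
          using Suc unfolding Inv_def by simp
        have st: "\<pi> (Suc n) = tP (pre (Suc n) \<pi>)" unfolding \<pi>_def
          using PSt by (subst abs_play_Suc) (simp add: \<pi>_def[symmetric] is_chal_def)
        have HH: "Hof (pre (Suc n) \<pi>) hv = Bc \<pi> n @ hv"
          unfolding Hof_def by (simp add: butlast_pre Bc_pre)
        let ?H = "Bc \<pi> n @ hv"
        let ?P = "outcome own s' ?H"
        have st2: "\<pi> (Suc n) = CSt (suf (length ?H - 1) ?P)"
          using st I PSt HH unfolding tP_def by (simp add: last_pre)
        have B: "Bc \<pi> (Suc n) = Bc \<pi> n @ butlast hv" using PSt by (simp add: Bc_Suc dps_def)
        have len: "length ?H = Suc (length (Bc \<pi> (Suc n)))" using B I by simp
        have "pre (length ?H - 1) ?P = take (length ?H - 1) (pre (length ?H) ?P)"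
          by (simp add: take_pre)
        also have "\<dots> = take (length ?H - 1) ?H" by (simp only: outcome_pre)
        also have "\<dots> = butlast ?H" by (simp only: butlast_conv_take)
        also have "\<dots> = Bc \<pi> (Suc n)" using B I by (simp add: butlast_append)
        finally have "Bc \<pi> (Suc n) \<frown> suf (length ?H - 1) ?P = ?P" by (metis prefix_suffix)
        then show ?thesis unfolding Inv_def st2 using I len by auto
      next
        case (CSt \<rho>)
        then obtain H where H: "is_hist E H" "compatible own i \<sigma> v0 H" "length H = Suc (length (Bc \<pi> n))"
             "Bc \<pi> n \<frown> \<rho> = outcome own s' H"
          using Suc unfolding Inv_def by auto
        have "AT (CSt \<rho>) (\<pi> (Suc n))" using tr CSt by metis
        then have "\<pi> (Suc n) = ATop \<or> (\<exists>d v. own (\<rho> d) = i \<and> (\<rho> d, v) \<in> E \<and> \<pi> (Suc n) = PSt (pre (Suc d) \<rho> @ [v]))"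
          using AT_CSt by blast
        then show ?thesis
        proof
          assume "\<pi> (Suc n) = ATop" then show ?thesis unfolding Inv_def by simp
        next
          assume "\<exists>d v. own (\<rho> d) = i \<and> (\<rho> d, v) \<in> E \<and> \<pi> (Suc n) = PSt (pre (Suc d) \<rho> @ [v])"
          then obtain d v where dv: "own (\<rho> d) = i" "(\<rho> d, v) \<in> E" "\<pi> (Suc n) = PSt (pre (Suc d) \<rho> @ [v])"
            by blast
          have B: "Bc \<pi> (Suc n) = Bc \<pi> n" using CSt by (simp add: Bc_Suc dps_def)
          let ?P = "outcome own s' H"
          let ?m = "length (Bc \<pi> n) + Suc d"
          have X: "Bc \<pi> n @ pre (Suc d) \<rho> = pre ?m ?P"
            using H(4)[symmetric] by (simp add: prefix_conc_snd)
          have h1: "is_hist E (pre ?m ?P)" using O_play[OF av H(1)] by (intro hist_pre) simp_all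
          have c1: "compatible own i \<sigma> v0 (pre ?m ?P)" using O_icompat[OF av ag H(1) H(2)] by (intro compat_pre) simp_all
          have "last (pre ?m ?P) = ?P (length (Bc \<pi> n) + d)" by (simp add: last_pre)
          also have "\<dots> = \<rho> d" using H(4)[symmetric] by simp
          finally have l: "last (pre ?m ?P) = \<rho> d" .
          have ne: "pre ?m ?P \<noteq> []" by simp
          have "is_hist E (pre ?m ?P @ [v])" using hist_snoc[OF h1] l dv by simp
          moreover have "compatible own i \<sigma> v0 (pre ?m ?P @ [v])" using compat_snoc[OF c1 ne] l dv by simp
          ultimately show ?thesis unfolding Inv_def dv(3) B using X[symmetric] by simp
        qed
      next
        case ATop
        then have "\<pi> (Suc n) = ATop" using tr AT_ATop by metis
        then show ?thesis unfolding Inv_def by simp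
      next
        case ABot then show ?thesis using Suc unfolding Inv_def by simp
      qed
    qed
    have nb: "\<pi> n \<noteq> ABot" for n using inv[of n] unfolding Inv_def by auto
    have g: "goodplay \<pi>" unfolding goodplay_def using p0 tr nb by blast
    let ?S = "(SUP si \<in> {si. valid_strat E own i si}. ereal (mu i (outcome own (\<sigma>(i := si)) [v0])))"
    have fin: "ereal (mu i P) \<le> ?S" if icP: "icompat \<sigma> P" and plP: "is_play E P" for P
    proof -
      obtain si where "valid_strat E own i si" "outcome own (\<sigma>(i := si)) [v0] = P"
        using realize[OF icP plP] by blast
      then show ?thesis by (metis (mono_tags, lifting) SUP_upper mem_Collect_eq)
    qed
    show ?thesis
    proof (cases "\<exists>n. \<pi> n = ATop")
      case True
      then obtain \<rho> k where k: "k \<ge> 1" "\<pi> (k - 1) = CSt \<rho>"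
        "nu_C mu i \<pi> = ereal (mu i (Bc \<pi> (k - 1) \<frown> \<rho>))"
        using nu_top[OF g] by blast
      then obtain H where H: "is_hist E H" "compatible own i \<sigma> v0 H" "Bc \<pi> (k - 1) \<frown> \<rho> = outcome own s' H"
        using inv[of "k - 1"] unfolding Inv_def by auto
      have "ereal (mu i (outcome own s' H)) \<le> ?S"
        using O_icompat[OF av ag H(1) H(2)] O_play[OF av H(1)] by (rule fin)
      then show ?thesis using k(3) H(3) unfolding \<pi>_def by simp
    next
      case False
      then have nt: "\<forall>n. \<pi> n \<noteq> ATop" by blast
      have unb: "\<forall>N. \<exists>n. N < length (Bc \<pi> n)" using unbounded[OF g nt] .
      let ?P = "iconcat (devpart \<pi>)"
      have pres: "is_hist E (pre m ?P) \<and> compatible own i \<sigma> v0 (pre m ?P)" if m: "1 \<le> m" for m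
      proof -
        obtain n where n: "m < length (Bc \<pi> n)" using unb by blast
        have pm: "pre m ?P = take m (Bc \<pi> n)"
          using iconcat_pre[OF unb, of n] n by (metis take_pre min.strict_order_iff)
        show ?thesis
        proof (cases "\<pi> n")
          case (PSt hv)
          then have I: "is_hist E (Bc \<pi> n @ hv)" "compatible own i \<sigma> v0 (Bc \<pi> n @ hv)"
            using inv[of n] unfolding Inv_def by auto
          have "take m (Bc \<pi> n @ hv) = take m (Bc \<pi> n)" using n by simp
          moreover have "Bc \<pi> n @ hv \<noteq> []" using n by auto
          ultimately show ?thesis using hist_take[OF I(1) m] compat_take[OF I(2) m] n pm by auto
        next
          case (CSt \<rho>)
          then obtain H where H: "is_hist E H" "compatible own i \<sigma> v0 H" "Bc \<pi> n \<frown> \<rho> = outcome own s' H"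
            using inv[of n] unfolding Inv_def by auto
          have "take m (Bc \<pi> n) = pre m (outcome own s' H)" using H(3)[symmetric] n by simp
          then show ?thesis using hist_pre[OF O_play[OF av H(1)] m] compat_pre[OF O_icompat[OF av ag H(1) H(2)] m] pm
            by simp
        next
          case ATop then show ?thesis using nt by simp
        next
          case ABot then show ?thesis using nb by simp
        qed
      qed
      have "is_play E ?P" using pres by (intro play_of) blast
      moreover have "icompat \<sigma> ?P" using pres by (intro icompat_of) blast
      ultimately have "ereal (mu i ?P) \<le> ?S" by (rule fin[rotated])
      then show ?thesis using nu_inf[OF g nt] unfolding \<pi>_def by simp
    qed
  qed
  show ?thesis using vP main by blast
qed

end



definition bof :: "'v astate list \<Rightarrow> nat" where
  "bof A = length (concat (map dps A))"

definition stepA :: "('v astate list \<Rightarrow> 'v astate) \<Rightarrow> 'v astate list \<Rightarrow> nat \<Rightarrow> 'v \<Rightarrow> 'v astate list" where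
  "stepA tP A m w = (case last A of
      CSt \<rho> \<Rightarrow> (if w = \<rho> (m - bof A) then A
               else A @ [PSt (pre (m - bof A) \<rho> @ [w])] @ [tP (A @ [PSt (pre (m - bof A) \<rho> @ [w])])])
    | _ \<Rightarrow> A)"

primrec simr :: "('v astate list \<Rightarrow> 'v astate) \<Rightarrow> 'v list \<Rightarrow> 'v astate list" where
  "simr tP [] = []"
| "simr tP (w # rs) = (if rs = [] then [PSt [w], tP [PSt [w]]] else stepA tP (simr tP rs) (length rs) w)"

definition sim :: "('v astate list \<Rightarrow> 'v astate) \<Rightarrow> 'v list \<Rightarrow> 'v astate list" where
  "sim tP H = simr tP (rev H)"

lemma sim_single: "sim tP [w] = [PSt [w], tP [PSt [w]]]"
  unfolding sim_def by simp

lemma sim_snoc: "H \<noteq> [] \<Longrightarrow> sim tP (H @ [w]) = stepA tP (sim tP H) (length H) w"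
  unfolding sim_def by simp

lemma bof_pre: "bof (pre c \<pi>) = length (Bc \<pi> c)"
  unfolding bof_def by (simp add: Bc_pre)

context GG begin

definition Fs :: "('v astate list \<Rightarrow> 'v astate) \<Rightarrow> 'v list \<Rightarrow> 'v" where
  "Fs tP H = (case last (sim tP H) of
      CSt \<rho> \<Rightarrow> (if (last H, \<rho> (length H - bof (sim tP H))) \<in> E then \<rho> (length H - bof (sim tP H))
               else SOME w. (last H, w) \<in> E)
    | _ \<Rightarrow> SOME w. (last H, w) \<in> E)"

lemma Fs_valid: "valid_strat E own j (Fs tP)"
  unfolding valid_strat_def Fs_def using some_succ by (auto split: astate.split)

definition tauC :: "(nat \<Rightarrow> 'v) \<Rightarrow> 'v astate list \<Rightarrow> 'v astate" where
  "tauC P A = (case last A of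
      CSt \<rho> \<Rightarrow> (if \<exists>n. \<rho> n \<noteq> P (bof A + n) then
                  (let d = LEAST n. \<rho> n \<noteq> P (bof A + n) in
                    if 0 < d \<and> own (\<rho> (d - 1)) = i \<and> (\<rho> (d - 1), P (bof A + d)) \<in> E
                    then PSt (pre d \<rho> @ [P (bof A + d)]) else ATop)
                else ATop)
    | _ \<Rightarrow> ATop)"

lemma tauC_valid: "valid_C E own mu lam i (tauC P)"
  unfolding valid_C_def
proof (intro allI impI)
  fix h :: "'v astate list" assume h: "h \<noteq> [] \<and> is_chal (last h)"
  then obtain \<rho> where r: "last h = CSt \<rho>" by (cases "last h") (auto simp: is_chal_def)
  show "AT (last h) (tauC P h)"
  proof (cases "\<exists>n. \<rho> n \<noteq> P (bof h + n)")
    case True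
    define d where "d = (LEAST n. \<rho> n \<noteq> P (bof h + n))"
    have dn: "\<rho> d \<noteq> P (bof h + d)" unfolding d_def by (rule LeastI_ex[OF True])
    show ?thesis
    proof (cases "0 < d \<and> own (\<rho> (d - 1)) = i \<and> (\<rho> (d - 1), P (bof h + d)) \<in> E")
      case True2: True
      then have t: "tauC P h = PSt (pre d \<rho> @ [P (bof h + d)])"
        unfolding tauC_def r using True by (simp add: d_def[symmetric] Let_def)
      have dd: "Suc (d - 1) = d" using True2 by simp
      show ?thesis unfolding t r abs_trans_def
        using True2 dn dd by (simp, intro exI[of _ "d - 1"]) simp
    next
      case False
      then have t: "tauC P h = ATop"
        unfolding tauC_def r using True by (simp add: d_def[symmetric] Let_def)
      show ?thesis unfolding t r abs_trans_def by simp
    qed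
  next
    case False
    then have t: "tauC P h = ATop" unfolding tauC_def r by simp
    show ?thesis unfolding t r abs_trans_def by simp
  qed
qed

context
  fixes tP :: "'v astate list \<Rightarrow> 'v astate" and P :: "nat \<Rightarrow> 'v"
  assumes vP: "valid_P E own mu lam i tP" and pl: "is_play E P" and ic: "icompat (\<lambda>j. Fs tP) P"
    and nb: "\<forall>n. abs_play tP (tauC P) (PSt [v0]) n \<noteq> ABot"
begin

definition pp where "pp = abs_play tP (tauC P) (PSt [v0])"

lemma pp_eq: "pp = abs_play tP (tauC P) (PSt [v0])" unfolding pp_def ..

lemma tr: "AT (pp n) (pp (Suc n))"
  unfolding pp_def using play_trans[OF vP tauC_valid] by blast

lemma pp0: "pp 0 = PSt [v0]" unfolding pp_def by (simp add: abs_play_0)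

lemma ppnb: "pp n \<noteq> ABot" using nb unfolding pp_def by blast

lemma ppC: "pp n = CSt \<rho> \<Longrightarrow> pp (Suc n) = tauC P (pre (Suc n) pp)"
  unfolding pp_def by (subst abs_play_Suc) (simp add: pp_def[symmetric] is_chal_def)

lemma ppP: "pp n = PSt hv \<Longrightarrow> pp (Suc n) = tP (pre (Suc n) pp)"
  unfolding pp_def by (subst abs_play_Suc) (simp add: pp_def[symmetric] is_chal_def)

lemma P0: "P 0 = v0" using ic unfolding icompat_def by simp

definition Sd :: "nat \<Rightarrow> nat \<Rightarrow> (nat \<Rightarrow> 'v) \<Rightarrow> bool" where
  "Sd m c \<rho> \<longleftrightarrow> sim tP (pre m P) = pre c pp \<and> 2 \<le> c \<and> pp (c - 1) = CSt \<rho> \<and> is_play E \<rho>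
     \<and> lam_consistent own mu lam \<rho> \<and> length (Bc pp c) < m \<and> pre (length (Bc pp c)) P = Bc pp c
     \<and> (\<forall>n. length (Bc pp c) + n < m \<longrightarrow> \<rho> n = P (length (Bc pp c) + n))"

lemma S_base: "\<exists>\<rho>. Sd 1 2 \<rho>"
proof -
  have p1: "pp 1 = tP [PSt [v0]]" using ppP[OF pp0] by (simp add: pre_Suc pp0)
  have "AT (PSt [v0]) (pp 1)" using tr[of 0] pp0 by simp
  then have d: "pp 1 = ABot \<or> (\<exists>\<rho>. pp 1 = CSt \<rho> \<and> [v0] \<noteq> [] \<and> \<rho> 0 = last [v0] \<and> is_play E \<rho>
                                \<and> lam_consistent own mu lam \<rho>)" by (rule AT_PSt)
  obtain \<rho> where r0: "pp 1 = CSt \<rho>" "\<rho> 0 = last [v0]" "is_play E \<rho>" "lam_consistent own mu lam \<rho>"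
    using d ppnb[of 1] by blast
  then have r: "pp 1 = CSt \<rho>" "\<rho> 0 = v0" "is_play E \<rho>" "lam_consistent own mu lam \<rho>" by simp_all
  have s: "sim tP (pre 1 P) = pre 2 pp"
    using p1 pp0 P0 by (simp add: pre_Suc sim_single numeral_2_eq_2)
  have B: "Bc pp 2 = []" using pp0 r by (simp add: numeral_2_eq_2 Bc_Suc dps_def)
  show ?thesis unfolding Sd_def using s r B P0 by (intro exI[of _ \<rho>]) simp
qed

lemma last_pre_c: "2 \<le> c \<Longrightarrow> last (pre c w) = w (c - 1)"
  using last_pre[where j="c - 1" and w=w] by simp

lemma F_at:
  assumes S: "Sd m c \<rho>"
  shows "Fs tP (pre m P) = \<rho> (m - length (Bc pp c))"
proof -
  let ?b = "length (Bc pp c)"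
  have S': "sim tP (pre m P) = pre c pp" "2 \<le> c" "pp (c - 1) = CSt \<rho>" "is_play E \<rho>" "?b < m"
    "\<forall>n. ?b + n < m \<longrightarrow> \<rho> n = P (?b + n)"
    using S unfolding Sd_def by auto
  have l: "last (sim tP (pre m P)) = CSt \<rho>" using S'(1,3) last_pre_c[OF S'(2), where w=pp] by simp
  have bo: "bof (sim tP (pre m P)) = ?b" using S' by (simp add: bof_pre)
  have m1: "1 \<le> m" using S' by simp
  have lp: "last (pre m P) = P (m - 1)" using last_pre_c[where c=m and w=P] last_pre[where j=0 and w=P] m1
    by (cases "m = 1") (auto simp: subsequence_def)
  have "P (m - 1) = \<rho> (m - 1 - ?b)" using S'(6)[rule_format, of "m - 1 - ?b"] S'(5) by simp
  moreover have "Suc (m - 1 - ?b) = m - ?b" using S'(5) by simp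
  ultimately have e: "(last (pre m P), \<rho> (m - ?b)) \<in> E" using S'(4) lp unfolding is_play_def by metis
  show ?thesis unfolding Fs_def l bo using e by simp
qed

lemma S_step:
  assumes S: "Sd m c \<rho>"
  defines "b \<equiv> length (Bc pp c)"
  shows "(P m = \<rho> (m - b) \<longrightarrow> Sd (Suc m) c \<rho>) \<and> (P m \<noteq> \<rho> (m - b) \<longrightarrow> (\<exists>\<rho>'. Sd (Suc m) (Suc (Suc c)) \<rho>'))"
proof -
  have S': "sim tP (pre m P) = pre c pp" "2 \<le> c" "pp (c - 1) = CSt \<rho>" "is_play E \<rho>"
    "lam_consistent own mu lam \<rho>" "b < m" "pre b P = Bc pp c"
    "\<forall>n. b + n < m \<longrightarrow> \<rho> n = P (b + n)"
    using S unfolding Sd_def b_def by auto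
  have pm: "pre m P \<noteq> []" "length (pre m P) = m" using S'(6) by auto
  have simS: "sim tP (pre (Suc m) P) = stepA tP (pre c pp) m (P m)"
    using sim_snoc[OF pm(1)] pm(2) S'(1) by (simp add: pre_Suc)
  have lc: "last (pre c pp) = CSt \<rho>" using S'(3) last_pre_c[OF S'(2), where w=pp] by simp
  have bo: "bof (pre c pp) = b" unfolding b_def by (simp add: bof_pre)
  have c1: "c = Suc (c - 1)" using S'(2) by simp
  show ?thesis
  proof (intro conjI impI)
    assume eq: "P m = \<rho> (m - b)"
    have st: "stepA tP (pre c pp) m (P m) = pre c pp" unfolding stepA_def lc bo using eq by simp
    have ag: "\<forall>n. b + n < Suc m \<longrightarrow> \<rho> n = P (b + n)"
    proof (intro allI impI)
      fix n assume n: "b + n < Suc m"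
      show "\<rho> n = P (b + n)"
      proof (cases "b + n < m")
        case True then show ?thesis using S'(8) by blast
      next
        case False then have "n = m - b" using n by simp
        then show ?thesis using eq S'(6) by simp
      qed
    qed
    show "Sd (Suc m) c \<rho>" unfolding Sd_def b_def[symmetric] using simS st S' ag by simp
  next
    assume neq: "P m \<noteq> \<rho> (m - b)"
    define X where "X = pre (m - b) \<rho> @ [P m]"
    have bm: "b + (m - b) = m" using S'(6) by simp
    have ex: "\<exists>n. \<rho> n \<noteq> P (b + n)" using neq bm by (intro exI[of _ "m - b"]) simp
    have least: "(LEAST n. \<rho> n \<noteq> P (b + n)) = m - b"
    proof (rule Least_equality)
      show "\<rho> (m - b) \<noteq> P (b + (m - b))" using neq bm by simp
    next
      fix y assume y: "\<rho> y \<noteq> P (b + y)"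
      show "m - b \<le> y"
      proof (rule ccontr)
        assume "\<not> m - b \<le> y"
        then have "b + y < m" by simp
        then show False using S'(8) y by blast
      qed
    qed
    have mb: "m - b - 1 + 1 = m - b" "0 < m - b" using S'(6) by auto
    have rP: "\<rho> (m - b - 1) = P (m - 1)"
      using S'(8)[rule_format, of "m - b - 1"] S'(6) by (simp add: algebra_simps)
    have m1: "Suc (m - 1) = m" using S'(6) by simp
    have oi: "own (\<rho> (m - b - 1)) = i"
    proof (rule ccontr)
      assume "own (\<rho> (m - b - 1)) \<noteq> i"
      then have "own (P (m - 1)) \<noteq> i" using rP by simp
      then have "P (Suc (m - 1)) = Fs tP (pre (Suc (m - 1)) P)" using ic unfolding icompat_def by blast
      then have "P m = Fs tP (pre m P)" using m1 by simp
      also have "\<dots> = \<rho> (m - b)" using F_at[OF S] b_def by simp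
      finally show False using neq by simp
    qed
    have ed: "(\<rho> (m - b - 1), P (b + (m - b))) \<in> E"
      using pl rP m1 bm unfolding is_play_def by (metis)
    have ppc: "pp c = PSt X"
    proof -
      have "pp c = tauC P (pre c pp)" using ppC[OF S'(3)] c1 by simp
      also have "\<dots> = PSt (pre (m - b) \<rho> @ [P (b + (m - b))])"
        unfolding tauC_def lc bo using ex least mb oi ed by (simp add: Let_def)
      finally show ?thesis unfolding X_def using bm by simp
    qed
    have ppc1: "pp (Suc c) = tP (pre c pp @ [PSt X])" using ppP[OF ppc] ppc by (simp add: pre_Suc)
    have stepeq: "stepA tP (pre c pp) m (P m) = pre (Suc (Suc c)) pp"
      unfolding stepA_def lc bo using neq ppc ppc1 by (simp add: pre_Suc X_def)
    have "AT (PSt X) (pp (Suc c))" using tr[of c] ppc by simp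
    then have d: "pp (Suc c) = ABot \<or> (\<exists>\<rho>'. pp (Suc c) = CSt \<rho>' \<and> X \<noteq> [] \<and> \<rho>' 0 = last X \<and> is_play E \<rho>'
                                \<and> lam_consistent own mu lam \<rho>')" by (rule AT_PSt)
    obtain \<rho>' where r: "pp (Suc c) = CSt \<rho>'" "\<rho>' 0 = last X" "is_play E \<rho>'" "lam_consistent own mu lam \<rho>'"
      using d ppnb[of "Suc c"] by blast
    have r0: "\<rho>' 0 = P m" using r(2) unfolding X_def by simp
    have B: "Bc pp (Suc (Suc c)) = Bc pp c @ pre (m - b) \<rho>"
      using ppc r(1) by (simp add: Bc_Suc dps_def X_def)
    have len: "length (Bc pp (Suc (Suc c))) = m" using B bm unfolding b_def by simp
    have sub: "P [b \<rightarrow> m] = pre (m - b) \<rho>"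
    proof (rule nth_equalityI)
      show "length (P [b \<rightarrow> m]) = length (pre (m - b) \<rho>)" by simp
    next
      fix k assume "k < length (P [b \<rightarrow> m])"
      then have k: "k < m - b" by simp
      then have "P [b \<rightarrow> m] ! k = P (b + k)" by simp
      also have "\<dots> = \<rho> k" using S'(8) k by simp
      finally show "P [b \<rightarrow> m] ! k = pre (m - b) \<rho> ! k" using k by simp
    qed
    have preeq: "pre m P = Bc pp (Suc (Suc c))"
      using subsequence_append[where i=b and j="m - b" and w=P] bm S'(7) sub B by simp
    have ag: "\<forall>n. m + n < Suc m \<longrightarrow> \<rho>' n = P (m + n)" using r0 by simp
    show "\<exists>\<rho>'. Sd (Suc m) (Suc (Suc c)) \<rho>'"
      unfolding Sd_def using simS stepeq r len preeq ag by (intro exI[of _ \<rho>']) simp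
  qed
qed

lemma S_all: "1 \<le> m \<Longrightarrow> \<exists>c \<rho>. Sd m c \<rho>"
proof (induct m)
  case 0 then show ?case by simp
next
  case (Suc m)
  show ?case
  proof (cases "m = 0")
    case True then show ?thesis using S_base by auto
  next
    case False
    then obtain c \<rho> where S: "Sd m c \<rho>" using Suc by auto
    show ?thesis using S_step[OF S] by (cases "P m = \<rho> (m - length (Bc pp c))") auto
  qed
qed

lemma next_stage:
  assumes S: "Sd m c \<rho>"
  defines "b \<equiv> length (Bc pp c)"
  shows "pp c = ATop \<or> (\<exists>d. m \<le> b + d \<and> pp c = PSt (pre d \<rho> @ [P (b + d)]) \<and> (\<forall>n<d. \<rho> n = P (b + n)))"
proof -
  have S': "2 \<le> c" "pp (c - 1) = CSt \<rho>" "\<forall>n. b + n < m \<longrightarrow> \<rho> n = P (b + n)"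
    using S unfolding Sd_def b_def by auto
  have lc: "last (pre c pp) = CSt \<rho>" using S'(2) last_pre_c[OF S'(1), where w=pp] by simp
  have bo: "bof (pre c pp) = b" unfolding b_def by (simp add: bof_pre)
  have c1: "c = Suc (c - 1)" using S'(1) by simp
  have ppc: "pp c = tauC P (pre c pp)" using ppC[OF S'(2)] c1 by simp
  show ?thesis
  proof (cases "\<exists>n. \<rho> n \<noteq> P (b + n)")
    case False
    then show ?thesis using ppc unfolding tauC_def lc bo by simp
  next
    case True
    define d where "d = (LEAST n. \<rho> n \<noteq> P (b + n))"
    have dn: "\<rho> d \<noteq> P (b + d)" unfolding d_def by (rule LeastI_ex[OF True])
    have bl: "\<forall>n<d. \<rho> n = P (b + n)" unfolding d_def using not_less_Least by blast
    have md: "m \<le> b + d" using S'(3) dn by (meson not_le)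
    show ?thesis
    proof (cases "0 < d \<and> own (\<rho> (d - 1)) = i \<and> (\<rho> (d - 1), P (b + d)) \<in> E")
      case True2: True
      then have "pp c = PSt (pre d \<rho> @ [P (b + d)])"
        using ppc unfolding tauC_def lc bo using True by (simp add: d_def[symmetric] Let_def)
      then show ?thesis using md bl by blast
    next
      case False
      then have "pp c = ATop"
        using ppc unfolding tauC_def lc bo using True by (simp add: d_def[symmetric] Let_def)
      then show ?thesis by simp
    qed
  qed
qed

lemma Bc_ATop: "pp c = ATop \<Longrightarrow> c \<le> n \<Longrightarrow> Bc pp n = Bc pp c"
proof (induct n)
  case 0 then show ?case by simp
next
  case (Suc n)
  show ?case
  proof (cases "c = Suc n")
    case True then show ?thesis by simp
  next
    case False
    then have cn: "c \<le> n" using Suc by simp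
    have "pp n = ATop" using ATop_abs[of pp c n] tr Suc(2) cn by blast
    then show ?thesis using Suc cn by (simp add: Bc_Suc dps_def)
  qed
qed

lemma good: "goodplay pp"
  unfolding goodplay_def using pp0 tr ppnb by blast

lemma Bc_P: "Bc pp n = pre (length (Bc pp n)) P"
proof -
  let ?m = "Suc (length (Bc pp n))"
  obtain c \<rho> where S: "Sd ?m c \<rho>" using S_all[of ?m] by auto
  let ?b = "length (Bc pp c)"
  have S': "pre ?b P = Bc pp c" using S unfolding Sd_def by auto
  have pref: "Bc pp k = pre (length (Bc pp k)) P" if k: "k \<le> c'" and c': "Bc pp c' = pre (length (Bc pp c')) P" for k c'
  proof -
    obtain zs where z: "Bc pp c' = Bc pp k @ zs" using Bc_mono[OF k] by blast
    have "Bc pp k = take (length (Bc pp k)) (Bc pp c')" using z by simp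
    also have "\<dots> = pre (length (Bc pp k)) P" using c' z by (metis take_pre min_def le_add1 length_append)
    finally show ?thesis .
  qed
  show ?thesis
  proof (cases "n \<le> c")
    case True then show ?thesis using pref[OF True] S' by simp
  next
    case False
    then have cn: "c \<le> n" by simp
    from next_stage[OF S] show ?thesis
    proof
      assume "pp c = ATop"
      then have "Bc pp n = Bc pp c" using Bc_ATop cn by blast
      then show ?thesis using S' by simp
    next
      assume "\<exists>d. ?m \<le> ?b + d \<and> pp c = PSt (pre d \<rho> @ [P (?b + d)]) \<and> (\<forall>k<d. \<rho> k = P (?b + k))"
      then obtain d where d: "?m \<le> ?b + d" "pp c = PSt (pre d \<rho> @ [P (?b + d)])" by blast
      have "Bc pp (Suc c) = Bc pp c @ pre d \<rho>" using d(2) by (simp add: Bc_Suc dps_def)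
      then have "?b + d \<le> length (Bc pp (Suc c))" by simp
      also have "\<dots> \<le> length (Bc pp n)" using False by (intro Bc_mono_len) simp
      finally show ?thesis using d(1) by simp
    qed
  qed
qed

lemma nu_eq: "nu_C mu i pp = ereal (mu i P)"
proof (cases "\<exists>n. pp n = ATop")
  case True
  then obtain \<rho>k k where k: "k \<ge> 1" "pp (k - 1) = CSt \<rho>k" "\<forall>n. pp n = ATop \<longleftrightarrow> k \<le> n"
     "nu_C mu i pp = ereal (mu i (Bc pp (k - 1) \<frown> \<rho>k))"
    using nu_top[OF good] by blast
  have k1: "k = Suc (k - 1)" using k(1) by simp
  have "Bc pp (Suc (k - 1)) = Bc pp (k - 1) @ dps (pp (k - 1))" by (rule Bc_Suc)
  then have Bk: "Bc pp k = Bc pp (k - 1)" using k(2) k1 by (simp add: dps_def)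
  let ?bk = "length (Bc pp k)"
  have "(Bc pp (k - 1) \<frown> \<rho>k) x = P x" for x
  proof -
    let ?m = "max (Suc x) (Suc ?bk)"
    obtain c \<rho> where S: "Sd ?m c \<rho>" using S_all[of ?m] by auto
    have S': "2 \<le> c" "pp (c - 1) = CSt \<rho>" "pre (length (Bc pp c)) P = Bc pp c"
       "\<forall>n. length (Bc pp c) + n < ?m \<longrightarrow> \<rho> n = P (length (Bc pp c) + n)"
      using S unfolding Sd_def by auto
    have ck: "c \<le> k"
    proof (rule ccontr)
      assume "\<not> c \<le> k" then have "k \<le> c - 1" by simp
      then have "pp (c - 1) = ATop" using k(3) by blast
      then show False using S'(2) by simp
    qed
    have ck2: "c = k"
    proof (rule ccontr)
      assume "c \<noteq> k" then have ck': "c < k" using ck by simp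
      then have "pp c \<noteq> ATop" using k(3) by simp
      then obtain d where d: "?m \<le> length (Bc pp c) + d" "pp c = PSt (pre d \<rho> @ [P (length (Bc pp c) + d)])"
        using next_stage[OF S] by blast
      have "Bc pp (Suc c) = Bc pp c @ pre d \<rho>" using d(2) by (simp add: Bc_Suc dps_def)
      then have "length (Bc pp c) + d \<le> length (Bc pp (Suc c))" by simp
      also have "\<dots> \<le> ?bk" using ck' by (intro Bc_mono_len) simp
      finally show False using d(1) by simp
    qed
    then have r: "\<rho> = \<rho>k" using S'(2) k(2) by simp
    show ?thesis
    proof (cases "x < ?bk")
      case True
      have "(Bc pp (k - 1) \<frown> \<rho>k) x = Bc pp k ! x" using True Bk by simp
      also have "\<dots> = P x" using S'(3) ck2 True by (metis subsequence_nth diff_zero add_0)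
      finally show ?thesis .
    next
      case False
      have "(Bc pp (k - 1) \<frown> \<rho>k) x = \<rho>k (x - ?bk)" using False Bk by simp
      also have "\<dots> = P (?bk + (x - ?bk))" using S'(4) ck2 r False by simp
      finally show ?thesis using False by simp
    qed
  qed
  then have "Bc pp (k - 1) \<frown> \<rho>k = P" by (rule ext)
  then show ?thesis using k(4) by simp
next
  case False
  then have nt: "\<forall>n. pp n \<noteq> ATop" by blast
  have unb: "\<forall>N. \<exists>n. N < length (Bc pp n)" using unbounded[OF good nt] .
  have "iconcat (devpart pp) x = P x" for x
  proof -
    obtain n where n: "x < length (Bc pp n)" using unb by blast
    have "iconcat (devpart pp) x = Bc pp n ! x" using iconcat_Bc[OF unb n] .
    also have "\<dots> = P x" using Bc_P[of n] n by (metis subsequence_nth diff_zero add_0)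
    finally show ?thesis .
  qed
  then have "iconcat (devpart pp) = P" by (rule ext)
  then show ?thesis using nu_inf[OF good nt] by simp
qed

lemma tail_cons:
  assumes m0: "1 \<le> m0" and fol: "\<forall>x\<ge>m0. P x = Fs tP (pre x P)"
  shows "lam_consistent own mu lam (suf (m0 - 1) P)"
proof -
  obtain c \<rho> where S: "Sd m0 c \<rho>" using S_all[OF m0] by auto
  let ?b = "length (Bc pp c)"
  have all: "Sd x c \<rho>" if "m0 \<le> x" for x
    using that
  proof (induct x rule: dec_induct)
    case base then show ?case using S .
  next
    case (step x)
    have "P x = \<rho> (x - ?b)" using fol step(1) F_at[OF step(3)] by simp
    then show ?case using S_step[OF step(3)] by simp
  qed
  have S': "?b < m0" "lam_consistent own mu lam \<rho>" using S unfolding Sd_def by auto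
  have "suf (m0 - 1) P = suf (m0 - 1 - ?b) \<rho>"
  proof (rule ext)
    fix n
    have "\<forall>k. ?b + k < m0 + n \<longrightarrow> \<rho> k = P (?b + k)" using all[of "m0 + n"] unfolding Sd_def by auto
    then have "\<rho> (m0 - 1 - ?b + n) = P (?b + (m0 - 1 - ?b + n))" using S'(1) by simp
    then show "suf (m0 - 1) P n = suf (m0 - 1 - ?b) \<rho> n" using S'(1) by simp
  qed
  then show ?thesis using lam_cons_suf[OF S'(2)] by simp
qed

end

lemma dir2:
  assumes vP: "valid_P E own mu lam i tP"
  shows "(INF \<sigma> \<in> lamRat E own mu lam i v0. SUP si \<in> {si. valid_strat E own i si}. ereal (mu i (outcome own (\<sigma>(i := si)) [v0])))
     \<le> (SUP tC \<in> {\<tau>. valid_C E own mu lam i \<tau>}. nu_C mu i (abs_play tP tC (PSt [v0])))"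
proof (cases "\<exists>tC. valid_C E own mu lam i tC \<and> (\<exists>n. abs_play tP tC (PSt [v0]) n = ABot)")
  case True
  then obtain tC where t: "valid_C E own mu lam i tC" "\<exists>n. abs_play tP tC (PSt [v0]) n = ABot" by blast
  then have "nu_C mu i (abs_play tP tC (PSt [v0])) = \<infinity>" unfolding nu_C_def by simp
  moreover have "nu_C mu i (abs_play tP tC (PSt [v0])) \<le> (SUP tC \<in> {\<tau>. valid_C E own mu lam i \<tau>}. nu_C mu i (abs_play tP tC (PSt [v0])))"
    using t(1) by (intro SUP_upper) simp
  ultimately have "(SUP tC \<in> {\<tau>. valid_C E own mu lam i \<tau>}. nu_C mu i (abs_play tP tC (PSt [v0]))) = \<infinity>"
    by (simp add: top_ereal_def[symmetric] top_unique)
  then show ?thesis by simp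
next
  case False
  then have nbA: "\<forall>n. abs_play tP (tauC P) (PSt [v0]) n \<noteq> ABot" for P using tauC_valid by blast
  define \<sigma> where "\<sigma> = (\<lambda>j::'p. Fs tP)"
  have av: "allvalid \<sigma>" unfolding allvalid_def \<sigma>_def using Fs_valid by blast
  have upd: "\<sigma>(i := Fs tP) = \<sigma>" unfolding \<sigma>_def by auto
  have ic_eq: "icompat \<sigma> Q = icompat (\<lambda>j. Fs tP) Q" for Q unfolding \<sigma>_def ..
  have inR: "\<sigma> \<in> lamRat E own mu lam i v0"
    unfolding lamRat_def mem_Collect_eq
  proof (intro conjI allI impI exI[of _ "Fs tP"])
    show "valid_strat E own j (\<sigma> j)" for j unfolding \<sigma>_def by (rule Fs_valid)
    show "valid_strat E own i (Fs tP)" by (rule Fs_valid)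
    fix hw assume hw: "is_hist E hw \<and> compatible own i \<sigma> v0 hw"
    let ?P = "outcome own \<sigma> hw"
    have pl: "is_play E ?P" using O_play[OF av] hw by blast
    have ic: "icompat (\<lambda>j. Fs tP) ?P" using O_icompat[OF av _ , of \<sigma> hw] hw ic_eq by simp
    have m0: "1 \<le> length hw" using hw unfolding is_hist_def by (cases hw) auto
    have fol: "\<forall>x\<ge>length hw. ?P x = Fs tP (pre x ?P)"
    proof (intro allI impI)
      fix x assume x: "length hw \<le> x"
      then have x1: "x = Suc (x - 1)" using m0 by simp
      have "?P (Suc (x - 1)) = \<sigma> (own (?P (x - 1))) (pre (Suc (x - 1)) ?P)"
        using x x1 by (intro outcome_high) simp
      then show "?P x = Fs tP (pre x ?P)" using x1 unfolding \<sigma>_def by simp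
    qed
    show "lam_consistent own mu lam (suf (length hw - 1) (outcome own (\<sigma>(i := Fs tP)) hw))"
      using tail_cons[OF vP pl ic nbA m0 fol] upd by simp
  qed
  have "(INF \<sigma> \<in> lamRat E own mu lam i v0. SUP si \<in> {si. valid_strat E own i si}. ereal (mu i (outcome own (\<sigma>(i := si)) [v0])))
     \<le> (SUP si \<in> {si. valid_strat E own i si}. ereal (mu i (outcome own (\<sigma>(i := si)) [v0])))"
    by (rule INF_lower[OF inR])
  also have "\<dots> \<le> (SUP tC \<in> {\<tau>. valid_C E own mu lam i \<tau>}. nu_C mu i (abs_play tP tC (PSt [v0])))"
  proof (rule SUP_least)
    fix si assume si: "si \<in> {si. valid_strat E own i si}"
    let ?P = "outcome own (\<sigma>(i := si)) [v0]"
    have av2: "allvalid (\<sigma>(i := si))" using av si unfolding allvalid_def by auto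
    have h0: "is_hist E [v0]" unfolding is_hist_def by simp
    have c0: "compatible own i \<sigma> v0 [v0]" unfolding compatible_def by simp
    have pl: "is_play E ?P" using O_play[OF av2 h0] .
    have ic: "icompat (\<lambda>j. Fs tP) ?P" using O_icompat[OF av2 _ h0 c0] ic_eq by simp
    have "nu_C mu i (abs_play tP (tauC ?P) (PSt [v0])) = ereal (mu i ?P)"
      using nu_eq[OF vP pl ic nbA] pp_eq[OF vP pl ic nbA] by simp
    moreover have "nu_C mu i (abs_play tP (tauC ?P) (PSt [v0])) \<le> (SUP tC \<in> {\<tau>. valid_C E own mu lam i \<tau>}. nu_C mu i (abs_play tP tC (PSt [v0])))"
      using tauC_valid by (intro SUP_upper) simp
    ultimately show "ereal (mu i ?P) \<le> (SUP tC \<in> {\<tau>. valid_C E own mu lam i \<tau>}. nu_C mu i (abs_play tP tC (PSt [v0])))" by simp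
  qed
  finally show ?thesis .
qed

end



theorem mainTheorem7:
  fixes E :: "('v::finite \<times> 'v) set"
    and own :: "'v \<Rightarrow> 'p::finite"
    and mu :: "'p \<Rightarrow> (nat \<Rightarrow> 'v) \<Rightarrow> real"
    and lam :: "'v \<Rightarrow> ereal"
    and i :: 'p and v0 :: 'v
  assumes "\<forall>v. \<exists>w. (v, w) \<in> E"
    and "\<forall>j. mu j \<in> borel_measurable (PiM UNIV (\<lambda>_. count_space UNIV))"
  shows "(INF \<tau>P \<in> {\<tau>. valid_P E own mu lam i \<tau>}. SUP \<tau>C \<in> {\<tau>. valid_C E own mu lam i \<tau>}.
            nu_C mu i (abs_play \<tau>P \<tau>C (PSt [v0])))
       = (INF \<sigma> \<in> lamRat E own mu lam i v0. SUP \<sigma>i \<in> {\<sigma>i. valid_strat E own i \<sigma>i}.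
            ereal (mu i (outcome own (\<sigma>(i := \<sigma>i)) [v0])))"
proof -
  interpret GG E own mu lam i v0 by unfold_locales (rule assms(1))
  show ?thesis
  proof (rule antisym)
    show "(INF \<tau>P \<in> {\<tau>. valid_P E own mu lam i \<tau>}. SUP \<tau>C \<in> {\<tau>. valid_C E own mu lam i \<tau>}.
            nu_C mu i (abs_play \<tau>P \<tau>C (PSt [v0])))
       \<le> (INF \<sigma> \<in> lamRat E own mu lam i v0. SUP \<sigma>i \<in> {\<sigma>i. valid_strat E own i \<sigma>i}.
            ereal (mu i (outcome own (\<sigma>(i := \<sigma>i)) [v0])))"
    proof (rule INF_greatest)
      fix \<sigma> assume s: "\<sigma> \<in> lamRat E own mu lam i v0"
      obtain tP where t: "valid_P E own mu lam i tP" and b: "\<forall>tC. valid_C E own mu lam i tC \<longrightarrow>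
         nu_C mu i (abs_play tP tC (PSt [v0])) \<le> (SUP si \<in> {si. valid_strat E own i si}. ereal (mu i (outcome own (\<sigma>(i := si)) [v0])))"
        using dir1[OF s] by blast
      show "(INF \<tau>P \<in> {\<tau>. valid_P E own mu lam i \<tau>}. SUP \<tau>C \<in> {\<tau>. valid_C E own mu lam i \<tau>}.
            nu_C mu i (abs_play \<tau>P \<tau>C (PSt [v0])))
         \<le> (SUP \<sigma>i \<in> {\<sigma>i. valid_strat E own i \<sigma>i}. ereal (mu i (outcome own (\<sigma>(i := \<sigma>i)) [v0])))"
      proof (rule INF_lower2)
        show "tP \<in> {\<tau>. valid_P E own mu lam i \<tau>}" using t by simp
        show "(SUP \<tau>C \<in> {\<tau>. valid_C E own mu lam i \<tau>}. nu_C mu i (abs_play tP \<tau>C (PSt [v0])))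
          \<le> (SUP \<sigma>i \<in> {\<sigma>i. valid_strat E own i \<sigma>i}. ereal (mu i (outcome own (\<sigma>(i := \<sigma>i)) [v0])))"
          using b by (intro SUP_least) simp
      qed
    qed
  next
    show "(INF \<sigma> \<in> lamRat E own mu lam i v0. SUP \<sigma>i \<in> {\<sigma>i. valid_strat E own i \<sigma>i}.
            ereal (mu i (outcome own (\<sigma>(i := \<sigma>i)) [v0])))
       \<le> (INF \<tau>P \<in> {\<tau>. valid_P E own mu lam i \<tau>}. SUP \<tau>C \<in> {\<tau>. valid_C E own mu lam i \<tau>}.
            nu_C mu i (abs_play \<tau>P \<tau>C (PSt [v0])))"
      by (rule INF_greatest) (use dir2 in simp)
  qed
qed


end
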